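(* Let $n\in\mathbb{N}$, $d_0,d_1,\dots,d_n\in\mathbb{N}$, $f_i\in C(\mathbb{R}^{d_i},\mathbb{R}^{d_{i-1}})$ for $i\in\{1,\dots,n\}$, and $\phi_1,\dots,\phi_n\in\mathbf{N}$ with $f_i=\mathcal{R}(\phi_i)$ for all $i\in\{1,\dots,n\}$. Then $$\Big|\Big|\Big|\bigodot_{i=1}^n\mathcal{D}(\phi_i)\Big|\Big|\Big|\le\max\big\{|||\mathcal{D}(\phi_1)|||,\dots,|||\mathcal{D}(\phi_n)|||,2d_1,2d_2,\dots,2d_{n-1}\big\}.$$
   Context: $\mathbf{A}_k\colon\mathbb{R}^k\to\mathbb{R}^k$ is the componentwise ReLU. $\mathbf{D}=\bigcup_{H\in\mathbb{N}}\mathbb{N}^{H+2}$; $\mathbf{N}=\bigcup_{H\in\mathbb{N}}\bigcup_{(k_0,\dots,k_{H+1})\in\mathbb{N}^{H+2}}\prod_{m=1}^{H+1}(\mathbb{R}^{k_m\times k_{m-1}}\times\mathbb{R}^{k_m})$. For $\Phi=((W_1,B_1),\dots,(W_{H+1},B_{H+1}))$ with $W_m\in\mathbb{R}^{k_m\times k_{m-1}}$, $B_m\in\mathbb{R}^{k_m}$: $\mathcal{D}(\Phi)=(k_0,\dots,k_{H+1})\in\mathbf{D}$ and $\mathcal{R}(\Phi)\in C(\mathbb{R}^{k_0},\mathbb{R}^{k_{H+1}})$, $(\mathcal{R}(\Phi))(x_0)=W_{H+1}x_H+B_{H+1}$ with $x_m=\mathbf{A}_{k_m}(W_mx_{m-1}+B_m)$,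 $m=1,\dots,H$. For $x=(x_1,\dots,x_k)$, $|||x|||=\max_i|x_i|$. The operation $\odot\colon\mathbf{D}\times\mathbf{D}\to\mathbf{D}$: for $\alpha=(\alpha_0,\dots,\alpha_{H_1+1})$, $\beta=(\beta_0,\dots,\beta_{H_2+1})$, $\alpha\odot\beta=(\beta_0,\beta_1,\dots,\beta_{H_2},\beta_{H_2+1}+\alpha_0,\alpha_1,\dots,\alpha_{H_1+1})$; $\odot$ is associative and $\bigodot_{i=1}^n\alpha_i=\alpha_1\odot\alpha_2\odot\dots\odot\alpha_n$. *)

theory Defs
  imports Main "HOL-Library.Extended_Real"
begin

text \<open>A layer is a pair (W, B) with
  W a matrix given as its list of rows and B a bias vector.  A network is a pair
  (ks, Ls) of its layer dimensions ks = (k_0, ..., k_{H+1}) and its list of layers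
  Ls = ((W_1,B_1), ..., (W_{H+1},B_{H+1})).  Natural numbers N = {1,2,3,...}.\<close>

type_synonym layer = "real list list \<times> real list"
type_synonym network = "nat list \<times> layer list"

definition is_network :: "network \<Rightarrow> bool" where
  "is_network \<Phi> \<longleftrightarrow>
     (let ks = fst \<Phi>; Ls = snd \<Phi> in
        length Ls \<ge> 2 \<and> length ks = length Ls + 1 \<and> (\<forall>k\<in>set ks. k \<ge> 1) \<and>
        (\<forall>m < length Ls.
           length (fst (Ls ! m)) = ks ! (m + 1) \<and>
           (\<forall>row \<in> set (fst (Ls ! m)). length row = ks ! m) \<and>
           length (snd (Ls ! m)) = ks ! (m + 1)))"

definition arch :: "network \<Rightarrow> nat list" where
  "arch \<Phi> = fst \<Phi>"

definition relu :: "real \<Rightarrow> real" where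
  "relu x = max 0 x"

definition matvec :: "real list list \<Rightarrow> real list \<Rightarrow> real list" where
  "matvec W x = map (\<lambda>row. sum_list (map2 (*) row x)) W"

definition affine :: "layer \<Rightarrow> real list \<Rightarrow> real list" where
  "affine L x = map2 (+) (matvec (fst L) x) (snd L)"

fun realize_layers :: "layer list \<Rightarrow> real list \<Rightarrow> real list" where
  "realize_layers [] x = x"
| "realize_layers [L] x = affine L x"
| "realize_layers (L # L' # Ls) x = realize_layers (L' # Ls) (map relu (affine L x))"

text \<open>The realization R(Phi), meaningful on inputs of length k_0.\<close>
definition realization :: "network \<Rightarrow> real list \<Rightarrow> real list" where
  "realization \<Phi> = realize_layers (snd \<Phi>)"

definition arch_comp :: "nat list \<Rightarrow> nat list \<Rightarrow> nat list" (infixr "\<odot>" 70) where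
  "\<alpha> \<odot> \<beta> = butlast \<beta> @ [last \<beta> + hd \<alpha>] @ tl \<alpha>"

fun arch_comp_list :: "nat list list \<Rightarrow> nat list" where
  "arch_comp_list [] = []"
| "arch_comp_list [a] = a"
| "arch_comp_list (a # b # as) = a \<odot> arch_comp_list (b # as)"

definition maxnorm :: "nat list \<Rightarrow> nat" where
  "maxnorm x = Max (set x)"

end

theory Submission
  imports Defs
begin

lemma comp_aux:
  assumes "as \<noteq> []" "\<forall>a\<in>set as. length a \<ge> 2"
  shows "set (arch_comp_list as) \<subseteq> (\<Union>a\<in>set as. set a) \<union> {last (as!(j+1)) + hd (as!j) | j. j+1 < length as}
     \<and> last (arch_comp_list as) = last (hd as) \<and> length (arch_comp_list as) \<ge> 2"
  using assms
proof (induction as rule: arch_comp_list.induct)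
  case 1
  then show ?case by simp
next
  case (2 a)
  then show ?case by simp
next
  case (3 a b as)
  let ?r = "arch_comp_list (b # as)"
  from 3 have IH: "set ?r \<subseteq> (\<Union>a\<in>set (b#as). set a) \<union> {last ((b#as)!(j+1)) + hd ((b#as)!j) | j. j+1 < length (b#as)}"
    and L: "last ?r = last b" and Len: "length ?r \<ge> 2" by auto
  have la: "length a \<ge> 2" using 3 by auto
  have eq: "arch_comp_list (a # b # as) = butlast ?r @ [last b + hd a] @ tl a"
    using L by (simp add: arch_comp_def)
  have s1: "set (butlast ?r) \<subseteq> set ?r" by (meson in_set_butlastD subsetI)
  have s2: "set (tl a) \<subseteq> set a" by (cases a) auto
  have j0: "last b + hd a \<in> {last ((a#b#as)!(j+1)) + hd ((a#b#as)!j) | j. j+1 < length (a#b#as)}"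
    by (rule CollectI, rule exI[of _ 0]) simp
  have sh: "{last ((b#as)!(j+1)) + hd ((b#as)!j) | j. j+1 < length (b#as)}
     \<subseteq> {last ((a#b#as)!(j+1)) + hd ((a#b#as)!j) | j. j+1 < length (a#b#as)}"
  proof
    fix x assume "x \<in> {last ((b#as)!(j+1)) + hd ((b#as)!j) | j. j+1 < length (b#as)}"
    then obtain j where "x = last ((b#as)!(j+1)) + hd ((b#as)!j)" "j+1 < length (b#as)" by blast
    then show "x \<in> {last ((a#b#as)!(j+1)) + hd ((a#b#as)!j) | j. j+1 < length (a#b#as)}"
      by (intro CollectI exI[of _ "Suc j"]) simp
  qed
  have c1: "set (arch_comp_list (a # b # as)) \<subseteq> (\<Union>a\<in>set (a#b#as). set a) \<union> {last ((a#b#as)!(j+1)) + hd ((a#b#as)!j) | j. j+1 < length (a#b#as)}"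
  proof -
    define J where "J = {last ((a#b#as)!(j+1)) + hd ((a#b#as)!j) | j. j+1 < length (a#b#as)}"
    define J' where "J' = {last ((b#as)!(j+1)) + hd ((b#as)!j) | j. j+1 < length (b#as)}"
    have u: "(\<Union>a\<in>set (a#b#as). set a) = set a \<union> (\<Union>a\<in>set (b#as). set a)" by simp
    have "set ?r \<subseteq> (\<Union>a\<in>set (b#as). set a) \<union> J" unfolding J_def
      by (rule order_trans[OF IH Un_mono[OF order_refl sh]])
    hence b1: "set (butlast ?r) \<subseteq> set a \<union> (\<Union>a\<in>set (b#as). set a) \<union> J"
      using s1 by blast
    have b2: "set [last b + hd a] \<subseteq> set a \<union> (\<Union>a\<in>set (b#as). set a) \<union> J"
      using j0 unfolding J_def by simp
    have b3: "set (tl a) \<subseteq> set a \<union> (\<Union>a\<in>set (b#as). set a) \<union> J"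
      using s2 by blast
    have "set (butlast ?r @ [last b + hd a] @ tl a) \<subseteq> set a \<union> (\<Union>a\<in>set (b#as). set a) \<union> J"
      unfolding set_append using b1 b2 b3 by (intro Un_least)
    thus ?thesis unfolding eq u J_def .
  qed
  have c2: "last (arch_comp_list (a # b # as)) = last (hd (a#b#as))"
    
  proof -
    have t: "tl a \<noteq> []" using la by (cases a) auto
    show ?thesis unfolding eq using t by (simp add: last_tl)
  qed
  have c3: "length (arch_comp_list (a # b # as)) \<ge> 2" unfolding eq using la by simp
  show ?case by (intro conjI c1 c2 c3)
qed

theorem lemma5p10:
  fixes n :: nat and d :: "nat \<Rightarrow> nat"
    and f :: "nat \<Rightarrow> real list \<Rightarrow> real list" and \<phi> :: "nat \<Rightarrow> network"
  assumes n: "n \<ge> 1"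
    and d_pos: "\<forall>i \<le> n. d i \<ge> 1"
    and f_cont: "\<forall>i \<in> {1..n}. \<forall>x. length x = d i \<longrightarrow> length (f i x) = d (i - 1)"
    and net: "\<forall>i \<in> {1..n}. is_network (\<phi> i)"
    and f_real: "\<forall>i \<in> {1..n}. hd (arch (\<phi> i)) = d i \<and> last (arch (\<phi> i)) = d (i - 1) \<and>
                   (\<forall>x. length x = d i \<longrightarrow> f i x = realization (\<phi> i) x)"
  shows "maxnorm (arch_comp_list (map (\<lambda>i. arch (\<phi> i)) [1..<n+1]))
         \<le> Max ((\<lambda>i. maxnorm (arch (\<phi> i))) ` {1..n} \<union> (\<lambda>i. 2 * d i) ` {1..<n})"
proof -
  let ?as = "map (\<lambda>i. arch (\<phi> i)) [1..<n+1]"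
  let ?M = "Max ((\<lambda>i. maxnorm (arch (\<phi> i))) ` {1..n} \<union> (\<lambda>i. 2 * d i) ` {1..<n})"
  have len: "\<forall>a\<in>set ?as. length a \<ge> 2"
  proof
    fix a assume "a \<in> set ?as"
    then obtain i where i0: "i \<in> set [1..<n+1]" "a = arch (\<phi> i)" unfolding set_map by blast
    hence i: "i \<in> {1..n}" "a = arch (\<phi> i)" by auto
    have "is_network (\<phi> i)" using net i by blast
    hence "length (snd (\<phi> i)) \<ge> 2 \<and> length (fst (\<phi> i)) = length (snd (\<phi> i)) + 1"
      unfolding is_network_def Let_def by blast
    thus "length a \<ge> 2" unfolding i arch_def by linarith
  qed
  have ne: "?as \<noteq> []" using n by simp
  note A = comp_aux[OF ne len]
  have fin: "finite ((\<lambda>i. maxnorm (arch (\<phi> i))) ` {1..n} \<union> (\<lambda>i. 2 * d i) ` {1..<n})" by simp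
  have bnd: "x \<le> ?M" if "x \<in> set (arch_comp_list ?as)" for x
  proof -
    from that A have "x \<in> (\<Union>a\<in>set ?as. set a) \<or> x \<in> {last (?as!(j+1)) + hd (?as!j) | j. j+1 < length ?as}"
      by blast
    then show ?thesis
    proof
      assume "x \<in> (\<Union>a\<in>set ?as. set a)"
      then obtain i where i0: "i \<in> set [1..<n+1]" "x \<in> set (arch (\<phi> i))" by auto
      hence i: "i \<in> {1..n}" "x \<in> set (arch (\<phi> i))" by auto
      have "x \<le> maxnorm (arch (\<phi> i))" unfolding maxnorm_def using i by simp
      also have "\<dots> \<le> ?M" using i fin by (intro Max_ge) auto
      finally show ?thesis .
    next
      assume "x \<in> {last (?as!(j+1)) + hd (?as!j) | j. j+1 < length ?as}"
      then obtain j where j0: "x = last (?as!(j+1)) + hd (?as!j)" "j+1 < length ?as" by blast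
      have lenas: "length ?as = n" by simp
      from j0 lenas have j: "x = last (?as!(j+1)) + hd (?as!j)" "j+1 < n" by simp_all
      have "?as!(j+1) = arch (\<phi> (j+2))" "?as!j = arch (\<phi> (j+1))" using j(2)
        by (simp_all del: upt_Suc add: nth_map_upt)
      hence "x = 2 * d (j+1)" using j f_real by (auto simp: mult_2)
      also have "\<dots> \<le> ?M" using j fin by (intro Max_ge) auto
      finally show ?thesis .
    qed
  qed
  have l2: "length (arch_comp_list ?as) \<ge> 2" using A by blast
  have "set (arch_comp_list ?as) \<noteq> {}"
  proof
    assume "set (arch_comp_list ?as) = {}"
    hence "arch_comp_list ?as = []" by (simp only: set_empty)
    with l2 show False by (simp only: list.size)
  qed
  then show ?thesis unfolding maxnorm_def[of "arch_comp_list ?as"] using bnd by (rule Max.boundedI[OF List.finite_set]) blast+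
qed

end
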